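(* Let $p$ be a prime and $d,u$ positive integers with $u\ge2$ if $p=2$. Let $\Gamma=\mathrm{CS}(u,d,p)$ and $\Gamma_i=\mathrm{CS}(u+i-1,d,p)$ for $i\ge1$. For each positive integer $i$ set $\Gamma_i^*=\Gamma_{\lceil \log_p i\rceil+1}$. Then $\{\Gamma_i^*\}_{i\ge1}$ is an $N_p$-sequence for $\Gamma$; that is, $\Gamma=\Gamma_1^*\supseteq\Gamma_2^*\supseteq\cdots$ are normal subgroups of $\Gamma$ with $[\Gamma_i^*,\Gamma_j^*]\subseteq\Gamma_{i+j}^*$ and $(\Gamma_i^* )^p\subseteq \Gamma_{ip}^*$ for all $i,j\ge1$.
   Context: $\mathrm{CS}(i,d,p)=\{A\in \mathrm{Mat}_d(\mathbb{Z}_p)\mid A\equiv I_d \bmod p^i\}$ with $\mathbb{Z}_p$ the $p$-adic integers. $\lceil x\rceil$ is the least integer $\ge x$. For subgroups $A,B$, $[A,B]=\langle aba^{-1}b^{-1}\mid a\in A,b\in B\rangle$, and $A^p=\langle a^p\mid a\in A\rangle$. *)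

theory Defs
  imports Complex_Main "HOL-Algebra.Algebra"
begin

text \<open>p-adic integers as the inverse limit of Z/p^n Z: compatible sequences
  of residues x n in {0..<p^n} with x (n+1) mod p^n = x n.\<close>

definition padic_int :: "nat \<Rightarrow> (nat \<Rightarrow> int) set" where
  "padic_int p = {x. (\<forall>n. 0 \<le> x n \<and> x n < int p ^ n) \<and>
                      (\<forall>n. x (Suc n) mod (int p ^ n) = x n)}"

definition padic_zero :: "nat \<Rightarrow> int" where
  "padic_zero = (\<lambda>n. 0)"

definition padic_one :: "nat \<Rightarrow> (nat \<Rightarrow> int)" where
  "padic_one p = (\<lambda>n. 1 mod (int p ^ n))"

definition padic_mat :: "nat \<Rightarrow> nat \<Rightarrow> (nat \<Rightarrow> nat \<Rightarrow> nat \<Rightarrow> int) set" where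
  "padic_mat d p = {A. (\<forall>i j. i < d \<and> j < d \<longrightarrow> A i j \<in> padic_int p) \<and>
                       (\<forall>i j. \<not> (i < d \<and> j < d) \<longrightarrow> A i j = padic_zero)}"

definition padic_mat_mult :: "nat \<Rightarrow> nat \<Rightarrow> (nat \<Rightarrow> nat \<Rightarrow> nat \<Rightarrow> int) \<Rightarrow>
    (nat \<Rightarrow> nat \<Rightarrow> nat \<Rightarrow> int) \<Rightarrow> (nat \<Rightarrow> nat \<Rightarrow> nat \<Rightarrow> int)" where
  "padic_mat_mult d p A B = (\<lambda>i j. if i < d \<and> j < d
      then (\<lambda>n. (\<Sum>l<d. A i l n * B l j n) mod (int p ^ n))
      else padic_zero)"

definition padic_mat_one :: "nat \<Rightarrow> nat \<Rightarrow> (nat \<Rightarrow> nat \<Rightarrow> nat \<Rightarrow> int)" where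
  "padic_mat_one d p = (\<lambda>i j. if i < d \<and> j < d \<and> i = j then padic_one p else padic_zero)"

text \<open>CS(i,d,p) = {A in Mat_d(Z_p) | A = I mod p^i}; congruence mod p^i of
  p-adic integers means equality of the level-i residues.\<close>

definition CS :: "nat \<Rightarrow> nat \<Rightarrow> nat \<Rightarrow> (nat \<Rightarrow> nat \<Rightarrow> nat \<Rightarrow> int) set" where
  "CS i d p = {A \<in> padic_mat d p. \<forall>a<d. \<forall>b<d. A a b i = padic_mat_one d p a b i}"

definition CS_group :: "nat \<Rightarrow> nat \<Rightarrow> nat \<Rightarrow> (nat \<Rightarrow> nat \<Rightarrow> nat \<Rightarrow> int) monoid" where
  "CS_group u d p = \<lparr>carrier = CS u d p, monoid.mult = padic_mat_mult d p, one = padic_mat_one d p\<rparr>"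

definition Gamma_seq :: "nat \<Rightarrow> nat \<Rightarrow> nat \<Rightarrow> nat \<Rightarrow> (nat \<Rightarrow> nat \<Rightarrow> nat \<Rightarrow> int) set" where
  "Gamma_seq u d p i = CS (u + i - 1) d p"

definition Gamma_star :: "nat \<Rightarrow> nat \<Rightarrow> nat \<Rightarrow> nat \<Rightarrow> (nat \<Rightarrow> nat \<Rightarrow> nat \<Rightarrow> int) set" where
  "Gamma_star u d p i = Gamma_seq u d p (nat \<lceil>log (real p) (real i)\<rceil> + 1)"

definition comm_subgroup :: "('a, 'b) monoid_scheme \<Rightarrow> 'a set \<Rightarrow> 'a set \<Rightarrow> 'a set" where
  "comm_subgroup G A B = generate G
     {a \<otimes>\<^bsub>G\<^esub> b \<otimes>\<^bsub>G\<^esub> inv\<^bsub>G\<^esub> a \<otimes>\<^bsub>G\<^esub> inv\<^bsub>G\<^esub> b | a b. a \<in> A \<and> b \<in> B}"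

definition pow_subgroup :: "('a, 'b) monoid_scheme \<Rightarrow> 'a set \<Rightarrow> nat \<Rightarrow> 'a set" where
  "pow_subgroup G A p = generate G {a [^]\<^bsub>G\<^esub> p | a. a \<in> A}"

end

theory Submission
  imports Defs
begin

definition dl :: "nat \<Rightarrow> nat \<Rightarrow> int" where "dl i j = (if i = j then 1 else 0)"

lemma padic_compat:
  assumes p: "p > 1" and x: "x \<in> padic_int p" and kn: "k \<le> n"
  shows "x n mod (int p ^ k) = x k"
  using kn
proof (induction n)
  case 0
  have "0 \<le> x 0" "x 0 < 1" using x by (auto simp: padic_int_def dest: spec[of _ 0])
  then show ?case using 0 by simp
next
  case (Suc n)
  show ?case
  proof (cases "k = Suc n")
    case True
    have "0 \<le> x k" "x k < int p ^ k" using x by (auto simp: padic_int_def)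
    then have "x k mod int p ^ k = x k" by (rule mod_pos_pos_trivial)
    then show ?thesis unfolding True .
  next
    case False
    then have "k \<le> n" using Suc by simp
    have "x (Suc n) mod int p ^ k = (x (Suc n) mod int p ^ n) mod int p ^ k"
      using \<open>k \<le> n\<close> by (intro mod_mod_cancel[symmetric] le_imp_power_dvd)
    also have "\<dots> = x n mod int p ^ k" using x by (simp add: padic_int_def)
    also have "\<dots> = x k" using Suc.IH \<open>k \<le> n\<close> by blast
    finally show ?thesis .
  qed
qed

lemma padic_zero_in: assumes "p > 1" shows "padic_zero \<in> padic_int p"
proof -
  have "0 < p" using assms by simp
  then show ?thesis by (simp add: padic_int_def padic_zero_def)
qed

lemma padic_one_in: assumes "p > 1" shows "padic_one p \<in> padic_int p"
proof -
  have "0 < p" using assms by simp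
  then have pos: "(0::int) < int p ^ n" for n by simp
  have "(1 mod int p ^ Suc n) mod int p ^ n = 1 mod int p ^ n" for n
    by (rule mod_mod_cancel) (simp add: le_imp_power_dvd)
  note c = this
  show ?thesis unfolding padic_int_def padic_one_def
  proof (intro CollectI conjI allI)
    fix n show "0 \<le> (1::int) mod int p ^ n" using pos[of n] by (rule pos_mod_sign)
    show "(1::int) mod int p ^ n < int p ^ n" using pos[of n] by (rule pos_mod_bound)
    show "(1::int) mod int p ^ Suc n mod int p ^ n = 1 mod int p ^ n" by (rule c)
  qed
qed

lemma mat_eqI:
  assumes "A \<in> padic_mat d p" "B \<in> padic_mat d p"
    and "\<And>i j n. i < d \<Longrightarrow> j < d \<Longrightarrow> A i j n = B i j n"
  shows "A = B"
proof (intro ext)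
  fix i j n
  show "A i j n = B i j n"
  proof (cases "i < d \<and> j < d")
    case True then show ?thesis using assms(3) by blast
  next
    case False
    then have "A i j = padic_zero" "B i j = padic_zero" using assms(1,2) unfolding padic_mat_def by blast+
    then show ?thesis by simp
  qed
qed

lemma sum_mod_prod:
  fixes M :: int
  shows "(\<Sum>l<d. f l * g l) mod M = (\<Sum>l<d. (f l mod M) * (g l mod M)) mod M"
proof -
  have "(\<Sum>l<d. f l * g l) mod M = (\<Sum>l<d. (f l * g l) mod M) mod M"
    by (rule mod_sum_eq[symmetric])
  also have "\<dots> = (\<Sum>l<d. ((f l mod M) * (g l mod M)) mod M) mod M"
    by (simp only: mod_mult_eq)
  also have "\<dots> = (\<Sum>l<d. (f l mod M) * (g l mod M)) mod M"
    by (rule mod_sum_eq)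
  finally show ?thesis .
qed

lemma mult_in:
  assumes p: "p > 1" and A: "A \<in> padic_mat d p" and B: "B \<in> padic_mat d p"
  shows "padic_mat_mult d p A B \<in> padic_mat d p"
proof -
  have "(\<lambda>n. (\<Sum>l<d. A i l n * B l j n) mod (int p ^ n)) \<in> padic_int p"
    if ij: "i < d" "j < d" for i j
  proof -
    have "(\<Sum>l<d. A i l (Suc n) * B l j (Suc n)) mod (int p ^ Suc n) mod int p ^ n
       = (\<Sum>l<d. A i l n * B l j n) mod (int p ^ n)" for n
    proof -
      have "(\<Sum>l<d. A i l (Suc n) * B l j (Suc n)) mod (int p ^ Suc n) mod int p ^ n
          = (\<Sum>l<d. A i l (Suc n) * B l j (Suc n)) mod int p ^ n"
        by (simp add: mod_mod_cancel)
      also have "\<dots> = (\<Sum>l<d. (A i l (Suc n) mod int p ^ n) * (B l j (Suc n) mod int p ^ n)) mod int p ^ n"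
        by (rule sum_mod_prod)
      also have "\<dots> = (\<Sum>l<d. A i l n * B l j n) mod int p ^ n"
        using A B ij by (intro arg_cong2[where f="(mod)"] sum.cong refl) (auto simp: padic_mat_def padic_int_def)
      finally show ?thesis .
    qed
    then show ?thesis using p by (simp add: padic_int_def)
  qed
  note * = this
  show ?thesis unfolding padic_mat_def
  proof (intro CollectI conjI allI impI)
    fix i j assume "i < d \<and> j < d"
    then show "padic_mat_mult d p A B i j \<in> padic_int p"
      using * unfolding padic_mat_mult_def by simp
  next
    fix i j assume "\<not> (i < d \<and> j < d)"
    then show "padic_mat_mult d p A B i j = padic_zero"
      unfolding padic_mat_mult_def by (rule if_not_P)
  qed
qed

lemma one_in: assumes p: "p > 1" shows "padic_mat_one d p \<in> padic_mat d p"
  unfolding padic_mat_def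
proof (intro CollectI conjI allI impI)
  fix i j assume "i < d \<and> j < d"
  then show "padic_mat_one d p i j \<in> padic_int p"
    using padic_zero_in[OF p] padic_one_in[OF p] by (simp add: padic_mat_one_def)
next
  fix i j assume "\<not> (i < d \<and> j < d)"
  then show "padic_mat_one d p i j = padic_zero"
    unfolding padic_mat_one_def by (intro if_not_P) blast
qed

lemma mult_entry:
  "i < d \<Longrightarrow> j < d \<Longrightarrow> padic_mat_mult d p A B i j n = (\<Sum>l<d. A i l n * B l j n) mod (int p ^ n)"
  by (simp add: padic_mat_mult_def)

lemma one_entry:
  "i < d \<Longrightarrow> j < d \<Longrightarrow> padic_mat_one d p i j n = (if i = j then 1 mod (int p ^ n) else 0)"
  by (simp add: padic_mat_one_def padic_one_def padic_zero_def)

lemma padic_entry_mod: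
  assumes "A \<in> padic_mat d p" "i < d" "j < d"
  shows "A i j n mod (int p ^ n) = A i j n"
proof -
  have "A i j \<in> padic_int p" using assms unfolding padic_mat_def by blast
  then have "0 \<le> A i j n" "A i j n < int p ^ n" unfolding padic_int_def by blast+
  then show ?thesis by (rule mod_pos_pos_trivial)
qed

lemma l_one:
  assumes p: "p > 1" and A: "A \<in> padic_mat d p"
  shows "padic_mat_mult d p (padic_mat_one d p) A = A"
proof (rule mat_eqI[OF mult_in[OF p one_in[OF p] A] A])
  fix i j n assume ij: "i < d" "j < d"
  have "(\<Sum>l<d. padic_mat_one d p i l n * A l j n) = (\<Sum>l<d. if i = l then (1 mod (int p ^ n)) * A l j n else 0)"
    using ij by (intro sum.cong refl) (simp add: one_entry)
  also have "\<dots> = (1 mod (int p ^ n)) * A i j n" using ij by (subst sum.delta'; simp)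
  finally have "padic_mat_mult d p (padic_mat_one d p) A i j n = ((1 mod (int p ^ n)) * A i j n) mod int p ^ n"
    using ij by (simp only: mult_entry)
  also have "\<dots> = (1 * A i j n) mod int p ^ n" by (rule mod_mult_left_eq)
  also have "\<dots> = A i j n" using padic_entry_mod[OF A ij] by simp
  finally show "padic_mat_mult d p (padic_mat_one d p) A i j n = A i j n" .
qed

lemma r_one:
  assumes p: "p > 1" and A: "A \<in> padic_mat d p"
  shows "padic_mat_mult d p A (padic_mat_one d p) = A"
proof (rule mat_eqI[OF mult_in[OF p A one_in[OF p]] A])
  fix i j n assume ij: "i < d" "j < d"
  have "(\<Sum>l<d. A i l n * padic_mat_one d p l j n) = (\<Sum>l<d. if l = j then A i l n * (1 mod (int p ^ n)) else 0)"
    using ij by (intro sum.cong refl) (simp add: one_entry)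
  also have "\<dots> = A i j n * (1 mod (int p ^ n))" using ij by (subst sum.delta; simp)
  finally have "padic_mat_mult d p A (padic_mat_one d p) i j n = (A i j n * (1 mod (int p ^ n))) mod int p ^ n"
    using ij by (simp only: mult_entry)
  also have "\<dots> = (A i j n * 1) mod int p ^ n" by (rule mod_mult_right_eq)
  also have "\<dots> = A i j n" using padic_entry_mod[OF A ij] by simp
  finally show "padic_mat_mult d p A (padic_mat_one d p) i j n = A i j n" .
qed

lemma sum_mod_left:
  fixes M :: int
  shows "(\<Sum>l<d. (x l mod M) * c l) mod M = (\<Sum>l<d. x l * c l) mod M"
proof -
  have "(\<Sum>l<d. (x l mod M) * c l) mod M = (\<Sum>l<d. ((x l mod M) * c l) mod M) mod M"
    by (rule mod_sum_eq[symmetric])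
  also have "\<dots> = (\<Sum>l<d. (x l * c l) mod M) mod M"
    by (simp only: mod_mult_left_eq)
  also have "\<dots> = (\<Sum>l<d. x l * c l) mod M"
    by (rule mod_sum_eq)
  finally show ?thesis .
qed

lemma sum_mod_right:
  fixes M :: int
  shows "(\<Sum>l<d. c l * (x l mod M)) mod M = (\<Sum>l<d. c l * x l) mod M"
proof -
  have "(\<Sum>l<d. c l * (x l mod M)) mod M = (\<Sum>l<d. (c l * (x l mod M)) mod M) mod M"
    by (rule mod_sum_eq[symmetric])
  also have "\<dots> = (\<Sum>l<d. (c l * x l) mod M) mod M"
    by (simp only: mod_mult_right_eq)
  also have "\<dots> = (\<Sum>l<d. c l * x l) mod M"
    by (rule mod_sum_eq)
  finally show ?thesis .
qed

lemma assoc: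
  assumes p: "p > 1" and A: "A \<in> padic_mat d p" and B: "B \<in> padic_mat d p" and C: "C \<in> padic_mat d p"
  shows "padic_mat_mult d p (padic_mat_mult d p A B) C = padic_mat_mult d p A (padic_mat_mult d p B C)"
proof (rule mat_eqI)
  show "padic_mat_mult d p (padic_mat_mult d p A B) C \<in> padic_mat d p"
    by (intro mult_in p A B C)
  show "padic_mat_mult d p A (padic_mat_mult d p B C) \<in> padic_mat d p"
    by (intro mult_in p A B C)
  fix i j n assume ij: "i < d" "j < d"
  have "padic_mat_mult d p (padic_mat_mult d p A B) C i j n
     = (\<Sum>l<d. ((\<Sum>m<d. A i m n * B m l n) mod int p ^ n) * C l j n) mod int p ^ n"
    using ij by (simp add: mult_entry)
  also have "\<dots> = (\<Sum>l<d. (\<Sum>m<d. A i m n * B m l n) * C l j n) mod int p ^ n"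
    by (rule sum_mod_left)
  also have "\<dots> = (\<Sum>l<d. \<Sum>m<d. A i m n * B m l n * C l j n) mod int p ^ n"
    by (simp add: sum_distrib_right)
  also have "\<dots> = (\<Sum>m<d. \<Sum>l<d. A i m n * (B m l n * C l j n)) mod int p ^ n"
    by (subst sum.swap) (simp add: mult.assoc)
  also have "\<dots> = (\<Sum>m<d. A i m n * (\<Sum>l<d. B m l n * C l j n)) mod int p ^ n"
    by (simp add: sum_distrib_left)
  also have "\<dots> = (\<Sum>m<d. A i m n * ((\<Sum>l<d. B m l n * C l j n) mod int p ^ n)) mod int p ^ n"
    by (rule sum_mod_right[symmetric])
  also have "\<dots> = padic_mat_mult d p A (padic_mat_mult d p B C) i j n"
    using ij by (simp add: mult_entry)
  finally show "padic_mat_mult d p (padic_mat_mult d p A B) C i j n = padic_mat_mult d p A (padic_mat_mult d p B C) i j n" .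
qed

definition lev_eq :: "nat \<Rightarrow> nat \<Rightarrow> (nat \<Rightarrow> nat \<Rightarrow> nat \<Rightarrow> int) \<Rightarrow> (nat \<Rightarrow> nat \<Rightarrow> nat \<Rightarrow> int) \<Rightarrow> bool" where
  "lev_eq d n A B \<longleftrightarrow> (\<forall>i<d. \<forall>j<d. A i j n = B i j n)"

lemma mult_cong:
  assumes "lev_eq d n A A'" "lev_eq d n B B'"
  shows "lev_eq d n (padic_mat_mult d p A B) (padic_mat_mult d p A' B')"
  using assms unfolding lev_eq_def by (simp add: mult_entry)

lemma CS_iff: "A \<in> CS k d p \<longleftrightarrow> A \<in> padic_mat d p \<and> lev_eq d k A (padic_mat_one d p)"
  unfolding CS_def lev_eq_def by blast

lemma lev_eq_mono:
  assumes p: "p > 1" and A: "A \<in> padic_mat d p" and B: "B \<in> padic_mat d p" and kn: "k \<le> n"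
    and e: "lev_eq d n A B"
  shows "lev_eq d k A B"
  unfolding lev_eq_def
proof (intro allI impI)
  fix i j assume ij: "i < d" "j < d"
  have a: "A i j \<in> padic_int p" "B i j \<in> padic_int p" using A B ij unfolding padic_mat_def by blast+
  have "A i j k = A i j n mod int p ^ k" using padic_compat[OF p a(1) kn] by simp
  also have "\<dots> = B i j n mod int p ^ k" using e ij unfolding lev_eq_def by simp
  also have "\<dots> = B i j k" using padic_compat[OF p a(2) kn] by simp
  finally show "A i j k = B i j k" .
qed

lemma CS_mono:
  assumes p: "p > 1" and "k \<le> m"
  shows "CS m d p \<subseteq> CS k d p"
proof
  fix A assume "A \<in> CS m d p"
  then show "A \<in> CS k d p" using lev_eq_mono[OF p _ one_in[OF p] assms(2)] unfolding CS_iff by blast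
qed

lemma CS_mult:
  assumes p: "p > 1" and A: "A \<in> CS k d p" and B: "B \<in> CS k d p"
  shows "padic_mat_mult d p A B \<in> CS k d p"
proof -
  have "lev_eq d k (padic_mat_mult d p A B) (padic_mat_mult d p (padic_mat_one d p) (padic_mat_one d p))"
    using A B unfolding CS_iff by (intro mult_cong) auto
  then show ?thesis using A B mult_in[OF p] l_one[OF p one_in[OF p]] unfolding CS_iff by auto
qed

lemma one_CS: "p > 1 \<Longrightarrow> padic_mat_one d p \<in> CS k d p"
  unfolding CS_iff lev_eq_def using one_in by blast

lemma CS_dvd:
  assumes p: "p > 1" and A: "A \<in> CS k d p" and kn: "k \<le> n" and ij: "i < d" "j < d"
  shows "int p ^ k dvd A i j n - dl i j"
proof -
  have a: "A i j \<in> padic_int p" using A ij unfolding CS_def padic_mat_def by blast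
  have "A i j n mod int p ^ k = A i j k" using padic_compat[OF p a kn] by simp
  also have "\<dots> = padic_mat_one d p i j k" using A ij unfolding CS_def by blast
  also have "\<dots> = dl i j mod int p ^ k" using ij by (simp add: one_entry dl_def)
  finally show ?thesis by (simp add: mod_eq_dvd_iff)
qed

lemma CS_dvdI:
  assumes p: "p > 1" and A: "A \<in> padic_mat d p" and kn: "k \<le> n"
    and dv: "\<And>i j. i < d \<Longrightarrow> j < d \<Longrightarrow> int p ^ k dvd A i j n - dl i j"
  shows "A \<in> CS k d p"
  unfolding CS_def
proof (intro CollectI conjI A allI impI)
  fix i j assume ij: "i < d" "j < d"
  have a: "A i j \<in> padic_int p" using A ij unfolding padic_mat_def by blast
  have "A i j k = A i j n mod int p ^ k" using padic_compat[OF p a kn] by simp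
  also have "\<dots> = dl i j mod int p ^ k" using dv[OF ij] by (simp add: mod_eq_dvd_iff)
  also have "\<dots> = padic_mat_one d p i j k" using ij by (simp add: one_entry dl_def)
  finally show "A i j k = padic_mat_one d p i j k" .
qed

lemma sum_expand:
  fixes C D :: "nat \<Rightarrow> nat \<Rightarrow> int"
  assumes ij: "i < d" "j < d"
  shows "(\<Sum>l<d. C i l * D l j) = dl i j + (C i j - dl i j) + (D i j - dl i j)
          + (\<Sum>l<d. (C i l - dl i l) * (D l j - dl l j))"
proof -
  have e: "(C i l - dl i l) * (D l j - dl l j) = C i l * D l j - dl i l * D l j - C i l * dl l j + dl i l * dl l j" for l
    by (simp add: algebra_simps)
  have "(\<Sum>l<d. dl i l * D l j) = (\<Sum>l<d. if i = l then D l j else 0)"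
    by (intro sum.cong) (auto simp: dl_def)
  also have "\<dots> = D i j" using ij by (subst sum.delta'; simp)
  finally have s1: "(\<Sum>l<d. dl i l * D l j) = D i j" .
  have "(\<Sum>l<d. C i l * dl l j) = (\<Sum>l<d. if l = j then C i l else 0)"
    by (intro sum.cong) (auto simp: dl_def)
  also have "\<dots> = C i j" using ij by (subst sum.delta; simp)
  finally have s2: "(\<Sum>l<d. C i l * dl l j) = C i j" .
  have "(\<Sum>l<d. dl i l * dl l j) = (\<Sum>l<d. if i = l then dl l j else 0)"
    by (intro sum.cong) (auto simp: dl_def)
  also have "\<dots> = dl i j" using ij by (subst sum.delta'; simp)
  finally have s3: "(\<Sum>l<d. dl i l * dl l j) = dl i j" .
  have "(\<Sum>l<d. (C i l - dl i l) * (D l j - dl l j)) = (\<Sum>l<d. C i l * D l j) - (\<Sum>l<d. dl i l * D l j) - (\<Sum>l<d. C i l * dl l j) + (\<Sum>l<d. dl i l * dl l j)"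
    unfolding e by (simp add: sum.distrib sum_subtractf)
  then show ?thesis using s1 s2 s3 by simp
qed

lemma comm_lev:
  assumes p: "p > 1" and A: "A \<in> CS a d p" and B: "B \<in> CS b d p"
  shows "lev_eq d (a + b) (padic_mat_mult d p A B) (padic_mat_mult d p B A)"
  unfolding lev_eq_def
proof (intro allI impI)
  fix i j assume ij: "i < d" "j < d"
  let ?n = "a + b"
  let ?EA = "\<lambda>i l. A i l ?n - dl i l" and ?EB = "\<lambda>i l. B i l ?n - dl i l"
  have dA: "int p ^ a dvd ?EA i l" if "i < d" "l < d" for i l using CS_dvd[OF p A _ that] by simp
  have dB: "int p ^ b dvd ?EB i l" if "i < d" "l < d" for i l using CS_dvd[OF p B _ that] by simp
  have "(\<Sum>l<d. A i l ?n * B l j ?n) - (\<Sum>l<d. B i l ?n * A l j ?n)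
      = (\<Sum>l<d. ?EA i l * ?EB l j) - (\<Sum>l<d. ?EB i l * ?EA l j)"
    using sum_expand[OF ij, of "\<lambda>i l. A i l ?n" "\<lambda>i l. B i l ?n"]
      sum_expand[OF ij, of "\<lambda>i l. B i l ?n" "\<lambda>i l. A i l ?n"] by simp
  also have "int p ^ ?n dvd \<dots>"
  proof (intro dvd_diff dvd_sum)
    fix l assume "l \<in> {..<d}"
    then have l: "l < d" by simp
    show "int p ^ ?n dvd ?EA i l * ?EB l j"
      unfolding power_add by (intro mult_dvd_mono dA dB ij l)
    show "int p ^ ?n dvd ?EB i l * ?EA l j"
      unfolding power_add by (subst mult.commute) (intro mult_dvd_mono dA dB ij l)
  qed
  finally show "padic_mat_mult d p A B i j ?n = padic_mat_mult d p B A i j ?n"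
    using ij by (simp add: mult_entry mod_eq_dvd_iff)
qed

lemma G_simps [simp]:
  "carrier (CS_group u d p) = CS u d p"
  "monoid.mult (CS_group u d p) = padic_mat_mult d p"
  "one (CS_group u d p) = padic_mat_one d p"
  by (simp_all add: CS_group_def)

lemma CS_mat: "A \<in> CS k d p \<Longrightarrow> A \<in> padic_mat d p"
  unfolding CS_def by blast

lemma CS_monoid:
  assumes p: "p > 1" shows "monoid (CS_group u d p)"
proof (rule monoidI)
  show "x \<otimes>\<^bsub>CS_group u d p\<^esub> y \<in> carrier (CS_group u d p)"
    if "x \<in> carrier (CS_group u d p)" "y \<in> carrier (CS_group u d p)" for x y
    using that CS_mult[OF p] by simp
  show "\<one>\<^bsub>CS_group u d p\<^esub> \<in> carrier (CS_group u d p)" using one_CS[OF p] by simp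
  show "x \<otimes>\<^bsub>CS_group u d p\<^esub> y \<otimes>\<^bsub>CS_group u d p\<^esub> z = x \<otimes>\<^bsub>CS_group u d p\<^esub> (y \<otimes>\<^bsub>CS_group u d p\<^esub> z)"
    if "x \<in> carrier (CS_group u d p)" "y \<in> carrier (CS_group u d p)" "z \<in> carrier (CS_group u d p)" for x y z
    using that assoc[OF p] CS_mat by simp
  show "\<one>\<^bsub>CS_group u d p\<^esub> \<otimes>\<^bsub>CS_group u d p\<^esub> x = x" if "x \<in> carrier (CS_group u d p)" for x
    using that l_one[OF p] CS_mat by simp
  show "x \<otimes>\<^bsub>CS_group u d p\<^esub> \<one>\<^bsub>CS_group u d p\<^esub> = x" if "x \<in> carrier (CS_group u d p)" for x
    using that r_one[OF p] CS_mat by simp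
qed

lemma pow_p:
  assumes p: "p > 1" and m: "u \<le> m" "1 \<le> m" and A: "A \<in> CS m d p"
  shows "A [^]\<^bsub>CS_group u d p\<^esub> p \<in> CS (Suc m) d p"
proof -
  have Au: "A \<in> CS u d p" using CS_mono[OF p m(1)] A by blast
  define N where "N = 2 * m"
  have mN: "m \<le> N" "Suc m \<le> N" using m by (auto simp: N_def)
  define E where "E i j = A i j N - dl i j" for i j
  have Eq: "int p ^ m dvd E i j" if "i < d" "j < d" for i j
    using CS_dvd[OF p A mN(1) that] unfolding E_def .
  have pw: "A [^]\<^bsub>CS_group u d p\<^esub> k \<in> CS u d p" for k :: nat
    using monoid.nat_pow_closed[OF CS_monoid[OF p, of u d], of A k] Au by simp
  have PN: "int p ^ N = int p ^ m * int p ^ m" unfolding N_def by (simp add: power_add[symmetric] mult_2)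
  have ind: "\<forall>i<d. \<forall>j<d. int p ^ N dvd (A [^]\<^bsub>CS_group u d p\<^esub> k) i j N - dl i j - int k * E i j" for k
  proof (induction k)
    case 0
    show ?case
    proof (intro allI impI)
      fix i j assume ij: "i < d" "j < d"
      have "int p ^ N dvd 1 - 1 mod int p ^ N" by (rule dvd_minus_mod)
      then have "int p ^ N dvd 1 mod int p ^ N - 1" by (simp add: dvd_diff_commute)
      then show "int p ^ N dvd (A [^]\<^bsub>CS_group u d p\<^esub> (0::nat)) i j N - dl i j - int 0 * E i j"
        using ij by (simp add: one_entry dl_def)
    qed
  next
    case (Suc k)
    show ?case
    proof (intro allI impI)
      fix i j assume ij: "i < d" "j < d"
      define C where "C = A [^]\<^bsub>CS_group u d p\<^esub> k"
      define XX where "XX = (\<Sum>l<d. C i l N * A l j N)"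
      define S where "S = (\<Sum>l<d. (C i l N - dl i l) * (A l j N - dl l j))"
      have ent: "(A [^]\<^bsub>CS_group u d p\<^esub> Suc k) i j N = XX mod int p ^ N"
        using ij by (simp add: C_def XX_def mult_entry)
      have d1: "int p ^ N dvd XX mod int p ^ N - XX"
        using dvd_minus_mod[of "int p ^ N" XX] by (simp add: dvd_diff_commute)
      have XE: "XX = dl i j + (C i j N - dl i j) + E i j + S"
        unfolding XX_def S_def E_def using sum_expand[OF ij, of "\<lambda>i l. C i l N" "\<lambda>i l. A i l N"] by simp
      have IH: "int p ^ N dvd C i l N - dl i l - int k * E i l" if "i < d" "l < d" for i l
        using Suc.IH that unfolding C_def by blast
      have Cq: "int p ^ m dvd C i l N - dl i l" if "i < d" "l < d" for i l
      proof -
        have "int p ^ m dvd int p ^ N" using mN(1) by (rule le_imp_power_dvd)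
        then have "int p ^ m dvd C i l N - dl i l - int k * E i l"
          using IH[OF that] by (rule dvd_trans)
        moreover have "int p ^ m dvd int k * E i l" using Eq[OF that] by simp
        ultimately have "int p ^ m dvd (C i l N - dl i l - int k * E i l) + int k * E i l"
          by (rule dvd_add)
        then show ?thesis by simp
      qed
      have dS: "int p ^ N dvd S"
        unfolding S_def PN
      proof (intro dvd_sum)
        fix l assume "l \<in> {..<d}"
        then have l: "l < d" by simp
        show "int p ^ m * int p ^ m dvd (C i l N - dl i l) * (A l j N - dl l j)"
          using mult_dvd_mono[OF Cq[OF ij(1) l] Eq[OF l ij(2)]] unfolding E_def .
      qed
      have "(A [^]\<^bsub>CS_group u d p\<^esub> Suc k) i j N - dl i j - int (Suc k) * E i j
          = (XX mod int p ^ N - XX) + S + (C i j N - dl i j - int k * E i j)"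
        unfolding ent using XE by (simp add: algebra_simps)
      also have "int p ^ N dvd \<dots>"
        by (intro dvd_add d1 dS IH ij)
      finally show "int p ^ N dvd (A [^]\<^bsub>CS_group u d p\<^esub> Suc k) i j N - dl i j - int (Suc k) * E i j" .
    qed
  qed
  show ?thesis
  proof (rule CS_dvdI[OF p _ mN(2)])
    show "A [^]\<^bsub>CS_group u d p\<^esub> p \<in> padic_mat d p" using pw CS_mat by blast
    fix i j assume ij: "i < d" "j < d"
    have "int p ^ Suc m dvd int p ^ N" using mN(2) by (rule le_imp_power_dvd)
    then have a: "int p ^ Suc m dvd (A [^]\<^bsub>CS_group u d p\<^esub> p) i j N - dl i j - int p * E i j"
      using ind[of p] ij by (meson dvd_trans)
    have b: "int p ^ Suc m dvd int p * E i j"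
      unfolding power_Suc by (intro mult_dvd_mono dvd_refl Eq ij)
    have "int p ^ Suc m dvd ((A [^]\<^bsub>CS_group u d p\<^esub> p) i j N - dl i j - int p * E i j) + int p * E i j"
      using a b by (rule dvd_add)
    then show "int p ^ Suc m dvd (A [^]\<^bsub>CS_group u d p\<^esub> p) i j N - dl i j" by simp
  qed
qed

lemma lev_eq_refl: "lev_eq d n A A" unfolding lev_eq_def by simp
lemma lev_eq_sym: "lev_eq d n A B \<Longrightarrow> lev_eq d n B A" unfolding lev_eq_def by simp
lemma lev_eq_trans: "lev_eq d n A B \<Longrightarrow> lev_eq d n B C \<Longrightarrow> lev_eq d n A C" unfolding lev_eq_def by simp

lemma CS_lev_one: "A \<in> CS k d p \<Longrightarrow> lev_eq d k A (padic_mat_one d p)"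
  unfolding CS_iff by blast

lemma CS_group_group:
  assumes p: "p > 1" and u: "u \<ge> 1"
  shows "group (CS_group u d p)"
proof -
  interpret M: monoid "CS_group u d p" by (rule CS_monoid[OF p])
  show ?thesis
  proof (rule groupI)
    fix x assume "x \<in> carrier (CS_group u d p)"
    then have x: "x \<in> CS u d p" by simp
    let ?P = "\<lambda>k. x [^]\<^bsub>CS_group u d p\<^esub> (k::nat)"
    have Pc: "?P k \<in> CS u d p" for k using M.nat_pow_closed[of x k] x by simp
    have pp: "?P (p ^ k) \<in> CS (u + k) d p" for k
    proof (induction k)
      case 0
      have "?P (p ^ 0) = x" using x M.l_one[of x] by simp
      then show ?case using x by simp
    next
      case (Suc k)
      have "?P (p ^ Suc k) = (?P (p ^ k)) [^]\<^bsub>CS_group u d p\<^esub> p"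
        using M.nat_pow_pow[of x "p ^ k" p] x by (simp add: mult.commute)
      also have "\<dots> \<in> CS (Suc (u + k)) d p"
        by (rule pow_p[OF p _ _ Suc.IH]) (use u in auto)
      finally show ?case by simp
    qed
    have pk: "z [^]\<^bsub>CS_group u d p\<^esub> (r::nat) \<in> CS k d p" if "z \<in> CS k d p" for z k r
    proof (induction r)
      case 0 then show ?case using one_CS[OF p] by simp
    next
      case (Suc r) then show ?case using CS_mult[OF p _ that] by simp
    qed
    have CSn: "A \<in> CS (u + n) d p \<Longrightarrow> A \<in> CS n d p" for A n
      using CS_mono[OF p, of n "u + n" d] by auto
    have P3: "lev_eq d n (?P (p ^ Suc n - 1)) (?P (p ^ n - 1))" for n
    proof -
      have pn: "1 \<le> p ^ n" "p ^ n \<le> p ^ Suc n" using p by auto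
      have e1: "p ^ Suc n - 1 = (p ^ n - 1) + p ^ n * (p - 1)"
        using pn p by (simp add: algebra_simps diff_mult_distrib2)
      have "?P (p ^ Suc n - 1) = ?P (p ^ n - 1) \<otimes>\<^bsub>CS_group u d p\<^esub> ?P (p ^ n * (p - 1))"
        unfolding e1 using M.nat_pow_mult[of x] x by simp
      also have "?P (p ^ n * (p - 1)) = (?P (p ^ n)) [^]\<^bsub>CS_group u d p\<^esub> (p - 1)"
        using M.nat_pow_pow[of x] x by simp
      finally have eq: "?P (p ^ Suc n - 1) = padic_mat_mult d p (?P (p ^ n - 1)) ((?P (p ^ n)) [^]\<^bsub>CS_group u d p\<^esub> (p - 1))"
        by simp
      have "(?P (p ^ n)) [^]\<^bsub>CS_group u d p\<^esub> (p - 1) \<in> CS n d p"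
        using CSn pk pp by blast
      then have "lev_eq d n (padic_mat_mult d p (?P (p ^ n - 1)) ((?P (p ^ n)) [^]\<^bsub>CS_group u d p\<^esub> (p - 1)))
                  (padic_mat_mult d p (?P (p ^ n - 1)) (padic_mat_one d p))"
        by (intro mult_cong lev_eq_refl CS_lev_one)
      also have "padic_mat_mult d p (?P (p ^ n - 1)) (padic_mat_one d p) = ?P (p ^ n - 1)"
        using r_one[OF p] Pc CS_mat by blast
      finally show ?thesis unfolding eq .
    qed
    define y where "y = (\<lambda>i j n. (?P (p ^ n - 1)) i j n)"
    have ylev: "lev_eq d n y (?P (p ^ n - 1))" for n unfolding y_def lev_eq_def by simp
    have ymat: "y \<in> padic_mat d p"
      unfolding padic_mat_def
    proof (intro CollectI conjI allI impI)
      fix i j assume ij: "i < d \<and> j < d"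
      have a: "?P k i j \<in> padic_int p" for k using Pc[of k] ij unfolding CS_def padic_mat_def by blast
      show "y i j \<in> padic_int p"
        unfolding padic_int_def
      proof (intro CollectI conjI allI)
        fix n
        show "0 \<le> y i j n" "y i j n < int p ^ n" using a[of "p ^ n - 1"] unfolding y_def padic_int_def by auto
        have "y i j (Suc n) mod int p ^ n = ?P (p ^ Suc n - 1) i j n"
          unfolding y_def using padic_compat[OF p a[of "p ^ Suc n - 1"], of n "Suc n"] by simp
        also have "\<dots> = y i j n" using P3[of n] ij unfolding lev_eq_def y_def by simp
        finally show "y i j (Suc n) mod int p ^ n = y i j n" .
      qed
    next
      fix i j assume ij: "\<not> (i < d \<and> j < d)"
      have "?P k i j = padic_zero" for k using Pc[of k] ij unfolding CS_def padic_mat_def by blast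
      then show "y i j = padic_zero" unfolding y_def by (simp add: padic_zero_def)
    qed
    have xm: "x \<in> padic_mat d p" using x CS_mat by blast
    show "\<exists>y\<in>carrier (CS_group u d p). y \<otimes>\<^bsub>CS_group u d p\<^esub> x = \<one>\<^bsub>CS_group u d p\<^esub>"
    proof (intro bexI)
      show "y \<otimes>\<^bsub>CS_group u d p\<^esub> x = \<one>\<^bsub>CS_group u d p\<^esub>"
        unfolding G_simps
      proof (rule mat_eqI[OF mult_in[OF p ymat xm] one_in[OF p]])
        fix i j n assume ij: "i < d" "j < d"
        have "lev_eq d n (padic_mat_mult d p y x) (padic_mat_mult d p (?P (p ^ n - 1)) x)"
          by (intro mult_cong ylev lev_eq_refl)
        also have "padic_mat_mult d p (?P (p ^ n - 1)) x = ?P (Suc (p ^ n - 1))" by simp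
        also have "Suc (p ^ n - 1) = p ^ n" using p by simp
        finally have "lev_eq d n (padic_mat_mult d p y x) (?P (p ^ n))" .
        moreover have "lev_eq d n (?P (p ^ n)) (padic_mat_one d p)"
          using CSn[OF pp] by (rule CS_lev_one)
        ultimately show "padic_mat_mult d p y x i j n = padic_mat_one d p i j n"
          using ij unfolding lev_eq_def by simp
      qed
      have "lev_eq d u y (padic_mat_one d p)"
        using lev_eq_trans[OF ylev CS_lev_one[OF Pc]] .
      then show "y \<in> carrier (CS_group u d p)" using ymat unfolding G_simps CS_iff by blast
    qed
  qed (auto simp: CS_mult[OF p] one_CS[OF p] l_one[OF p] CS_mat assoc[OF p])
qed

lemma CS_normal:
  assumes p: "p > 1" and u: "u \<ge> 1" and k: "u \<le> k"
  shows "CS k d p \<lhd> CS_group u d p"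
proof -
  interpret G: group "CS_group u d p" by (rule CS_group_group[OF p u])
  have sub: "CS k d p \<subseteq> CS u d p" by (rule CS_mono[OF p k])
  have S: "subgroup (CS k d p) (CS_group u d p)"
  proof (rule G.subgroupI)
    show "CS k d p \<subseteq> carrier (CS_group u d p)" using sub by simp
    show "CS k d p \<noteq> {}" using one_CS[OF p] by blast
    show "a \<otimes>\<^bsub>CS_group u d p\<^esub> b \<in> CS k d p" if "a \<in> CS k d p" "b \<in> CS k d p" for a b
      using CS_mult[OF p that] by simp
    fix h assume h: "h \<in> CS k d p"
    then have hc: "h \<in> carrier (CS_group u d p)" using sub by auto
    have ic: "inv\<^bsub>CS_group u d p\<^esub> h \<in> CS u d p" using G.inv_closed[OF hc] by simp
    have "lev_eq d k (padic_mat_mult d p (inv\<^bsub>CS_group u d p\<^esub> h) (padic_mat_one d p))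
            (padic_mat_mult d p (inv\<^bsub>CS_group u d p\<^esub> h) h)"
      by (intro mult_cong lev_eq_refl lev_eq_sym[OF CS_lev_one[OF h]])
    moreover have "padic_mat_mult d p (inv\<^bsub>CS_group u d p\<^esub> h) (padic_mat_one d p) = inv\<^bsub>CS_group u d p\<^esub> h"
      using G.r_one[OF G.inv_closed[OF hc]] by simp
    moreover have "padic_mat_mult d p (inv\<^bsub>CS_group u d p\<^esub> h) h = padic_mat_one d p"
      using G.l_inv[OF hc] by simp
    ultimately have "lev_eq d k (inv\<^bsub>CS_group u d p\<^esub> h) (padic_mat_one d p)" by simp
    then show "inv\<^bsub>CS_group u d p\<^esub> h \<in> CS k d p" using ic CS_mat unfolding CS_iff by blast
  qed
  have "x \<otimes>\<^bsub>CS_group u d p\<^esub> h \<otimes>\<^bsub>CS_group u d p\<^esub> inv\<^bsub>CS_group u d p\<^esub> x \<in> CS k d p"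
    if x: "x \<in> carrier (CS_group u d p)" and h: "h \<in> CS k d p" for x h
  proof -
    have ix: "inv\<^bsub>CS_group u d p\<^esub> x \<in> carrier (CS_group u d p)" using G.inv_closed[OF x] .
    have hc: "h \<in> carrier (CS_group u d p)" using sub h by auto
    have "lev_eq d k (padic_mat_mult d p (padic_mat_mult d p x h) (inv\<^bsub>CS_group u d p\<^esub> x))
            (padic_mat_mult d p (padic_mat_mult d p x (padic_mat_one d p)) (inv\<^bsub>CS_group u d p\<^esub> x))"
      by (intro mult_cong lev_eq_refl CS_lev_one[OF h])
    moreover have "padic_mat_mult d p (padic_mat_mult d p x (padic_mat_one d p)) (inv\<^bsub>CS_group u d p\<^esub> x) = padic_mat_one d p"
      using G.r_one[OF x] G.r_inv[OF x] by simp
    moreover have "x \<otimes>\<^bsub>CS_group u d p\<^esub> h \<otimes>\<^bsub>CS_group u d p\<^esub> inv\<^bsub>CS_group u d p\<^esub> x \<in> CS u d p"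
      using G.m_closed[OF G.m_closed[OF x hc] ix] by simp
    ultimately show ?thesis using CS_mat unfolding CS_iff by simp
  qed
  then show ?thesis using S G.normal_inv_iff by blast
qed

lemma CS_subgroup:
  assumes p: "p > 1" and u: "u \<ge> 1" and k: "u \<le> k"
  shows "subgroup (CS k d p) (CS_group u d p)"
  using CS_normal[OF assms] by (simp add: normal_def)

lemma CS_comm:
  assumes p: "p > 1" and u: "u \<ge> 1" and a: "u \<le> \<alpha>" and b: "u \<le> \<beta>"
    and A: "A \<in> CS \<alpha> d p" and B: "B \<in> CS \<beta> d p"
  shows "A \<otimes>\<^bsub>CS_group u d p\<^esub> B \<otimes>\<^bsub>CS_group u d p\<^esub> inv\<^bsub>CS_group u d p\<^esub> A \<otimes>\<^bsub>CS_group u d p\<^esub> inv\<^bsub>CS_group u d p\<^esub> B \<in> CS (\<alpha> + \<beta>) d p"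
proof -
  interpret G: group "CS_group u d p" by (rule CS_group_group[OF p u])
  have Ac: "A \<in> carrier (CS_group u d p)" using CS_mono[OF p a] A by auto
  have Bc: "B \<in> carrier (CS_group u d p)" using CS_mono[OF p b] B by auto
  have iA: "inv\<^bsub>CS_group u d p\<^esub> A \<in> carrier (CS_group u d p)" using G.inv_closed[OF Ac] .
  have iB: "inv\<^bsub>CS_group u d p\<^esub> B \<in> carrier (CS_group u d p)" using G.inv_closed[OF Bc] .
  have "lev_eq d (\<alpha> + \<beta>) (padic_mat_mult d p (padic_mat_mult d p (padic_mat_mult d p A B) (inv\<^bsub>CS_group u d p\<^esub> A)) (inv\<^bsub>CS_group u d p\<^esub> B))
     (padic_mat_mult d p (padic_mat_mult d p (padic_mat_mult d p B A) (inv\<^bsub>CS_group u d p\<^esub> A)) (inv\<^bsub>CS_group u d p\<^esub> B))"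
    by (intro mult_cong lev_eq_refl comm_lev[OF p A B])
  moreover have "B \<otimes>\<^bsub>CS_group u d p\<^esub> A \<otimes>\<^bsub>CS_group u d p\<^esub> inv\<^bsub>CS_group u d p\<^esub> A = B"
    using G.m_assoc[OF Bc Ac iA] G.r_inv[OF Ac] G.r_one[OF Bc] by simp
  then have "padic_mat_mult d p (padic_mat_mult d p (padic_mat_mult d p B A) (inv\<^bsub>CS_group u d p\<^esub> A)) (inv\<^bsub>CS_group u d p\<^esub> B) = padic_mat_one d p"
    using G.r_inv[OF Bc] by simp
  moreover have "A \<otimes>\<^bsub>CS_group u d p\<^esub> B \<otimes>\<^bsub>CS_group u d p\<^esub> inv\<^bsub>CS_group u d p\<^esub> A \<otimes>\<^bsub>CS_group u d p\<^esub> inv\<^bsub>CS_group u d p\<^esub> B \<in> CS u d p"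
    using G.m_closed[OF G.m_closed[OF G.m_closed[OF Ac Bc] iA] iB] by simp
  ultimately show ?thesis using CS_mat unfolding CS_iff by simp
qed

lemma log_ceil_nonneg:
  assumes p: "p > 1" and i: "i \<ge> 1"
  shows "0 \<le> \<lceil>log (real p) (real i)\<rceil>"
proof -
  have "0 \<le> log (real p) (real i)" using p i by simp
  then show ?thesis by simp
qed

lemma log_ceil_mono:
  assumes p: "p > 1" and i: "i \<ge> 1" and ij: "i \<le> j"
  shows "\<lceil>log (real p) (real i)\<rceil> \<le> \<lceil>log (real p) (real j)\<rceil>"
proof -
  have "log (real p) (real i) \<le> log (real p) (real j)" using p i ij by simp
  then show ?thesis by (rule ceiling_mono)
qed

lemma log_ceil_mult:
  assumes p: "p > 1" and i: "i \<ge> 1"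
  shows "\<lceil>log (real p) (real (i * p))\<rceil> = \<lceil>log (real p) (real i)\<rceil> + 1"
proof -
  have "log (real p) (real (i * p)) = log (real p) (real i) + 1"
    using p i by (simp add: log_mult)
  then show ?thesis by simp
qed

lemma log_ceil_add:
  assumes p: "p > 1" and i: "i \<ge> 1" and j: "j \<ge> 1"
  shows "\<lceil>log (real p) (real (i + j))\<rceil> \<le> \<lceil>log (real p) (real i)\<rceil> + \<lceil>log (real p) (real j)\<rceil> + 1"
proof -
  define m where "m = max i j"
  have m1: "m \<ge> 1" using i by (simp add: m_def)
  have "i + j \<le> m * p"
  proof -
    have "i + j \<le> m * 2" unfolding m_def by simp
    also have "\<dots> \<le> m * p" using p by simp
    finally show ?thesis .
  qed
  then have "\<lceil>log (real p) (real (i + j))\<rceil> \<le> \<lceil>log (real p) (real (m * p))\<rceil>"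
    using log_ceil_mono[OF p, of "i + j" "m * p"] i by simp
  also have "\<dots> = \<lceil>log (real p) (real m)\<rceil> + 1" by (rule log_ceil_mult[OF p m1])
  also have "\<lceil>log (real p) (real m)\<rceil> \<le> \<lceil>log (real p) (real i)\<rceil> + \<lceil>log (real p) (real j)\<rceil>"
    using log_ceil_nonneg[OF p i] log_ceil_nonneg[OF p j] unfolding m_def by (cases "i \<le> j") (auto simp: max_def)
  finally show ?thesis by simp
qed

lemma Gamma_star_eq: "Gamma_star u d p i = CS (u + nat \<lceil>log (real p) (real i)\<rceil>) d p"
  by (simp add: Gamma_star_def Gamma_seq_def)

theorem lemma3p1:
  fixes p d u :: nat
  assumes "Factorial_Ring.prime p" and "d > 0" and "u > 0" and "p = 2 \<longrightarrow> u \<ge> 2"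
  shows "Gamma_star u d p 1 = CS u d p
    \<and> (\<forall>i\<ge>1. Gamma_star u d p (Suc i) \<subseteq> Gamma_star u d p i)
    \<and> (\<forall>i\<ge>1. Gamma_star u d p i \<lhd> CS_group u d p)
    \<and> (\<forall>i\<ge>1. \<forall>j\<ge>1. comm_subgroup (CS_group u d p) (Gamma_star u d p i) (Gamma_star u d p j)
                      \<subseteq> Gamma_star u d p (i + j))
    \<and> (\<forall>i\<ge>1. pow_subgroup (CS_group u d p) (Gamma_star u d p i) p \<subseteq> Gamma_star u d p (i * p))"
proof -
  have "p \<noteq> 0" "p \<noteq> 1" using assms(1) by auto
  then have p: "p > 1" by simp
  have u: "u \<ge> 1" using assms(3) by simp
  interpret G: group "CS_group u d p" by (rule CS_group_group[OF p u])
  let ?c = "\<lambda>i::nat. nat \<lceil>log (real p) (real i)\<rceil>"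
  have c1: "?c 1 = 0" by simp
  have part1: "Gamma_star u d p 1 = CS u d p" unfolding Gamma_star_eq by simp
  have part2: "Gamma_star u d p (Suc i) \<subseteq> Gamma_star u d p i" if "i \<ge> 1" for i
  proof -
    have "?c i \<le> ?c (Suc i)" using log_ceil_mono[OF p that, of "Suc i"] by (intro nat_mono) simp
    then show ?thesis unfolding Gamma_star_eq by (intro CS_mono[OF p]) simp
  qed
  have part3: "Gamma_star u d p i \<lhd> CS_group u d p" for i
    unfolding Gamma_star_eq by (rule CS_normal[OF p u]) simp
  have part4: "comm_subgroup (CS_group u d p) (Gamma_star u d p i) (Gamma_star u d p j)
                      \<subseteq> Gamma_star u d p (i + j)" if i: "i \<ge> 1" and j: "j \<ge> 1" for i j
    unfolding comm_subgroup_def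
  proof (rule G.generate_subgroup_incl)
    show "subgroup (Gamma_star u d p (i + j)) (CS_group u d p)"
      unfolding Gamma_star_eq by (rule CS_subgroup[OF p u]) simp
    have le: "?c (i + j) \<le> u + ?c i + ?c j"
      using log_ceil_add[OF p i j] log_ceil_nonneg[OF p i] log_ceil_nonneg[OF p j] u by linarith
    show "{a \<otimes>\<^bsub>CS_group u d p\<^esub> b \<otimes>\<^bsub>CS_group u d p\<^esub> inv\<^bsub>CS_group u d p\<^esub> a \<otimes>\<^bsub>CS_group u d p\<^esub> inv\<^bsub>CS_group u d p\<^esub> b |a b.
          a \<in> Gamma_star u d p i \<and> b \<in> Gamma_star u d p j} \<subseteq> Gamma_star u d p (i + j)"
    proof (intro subsetI, elim CollectE exE conjE)
      fix x a b assume x: "x = a \<otimes>\<^bsub>CS_group u d p\<^esub> b \<otimes>\<^bsub>CS_group u d p\<^esub> inv\<^bsub>CS_group u d p\<^esub> a \<otimes>\<^bsub>CS_group u d p\<^esub> inv\<^bsub>CS_group u d p\<^esub> b"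
        and a: "a \<in> Gamma_star u d p i" and b: "b \<in> Gamma_star u d p j"
      have "x \<in> CS ((u + ?c i) + (u + ?c j)) d p"
        unfolding x using a b unfolding Gamma_star_eq by (intro CS_comm[OF p u]) auto
      also have "\<dots> \<subseteq> Gamma_star u d p (i + j)"
        unfolding Gamma_star_eq using le by (intro CS_mono[OF p]) simp
      finally show "x \<in> Gamma_star u d p (i + j)" .
    qed
  qed
  have part5: "pow_subgroup (CS_group u d p) (Gamma_star u d p i) p \<subseteq> Gamma_star u d p (i * p)"
    if i: "i \<ge> 1" for i
    unfolding pow_subgroup_def
  proof (rule G.generate_subgroup_incl)
    show "subgroup (Gamma_star u d p (i * p)) (CS_group u d p)"
      unfolding Gamma_star_eq by (rule CS_subgroup[OF p u]) simp
    have ce: "?c (i * p) = Suc (?c i)"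
    proof -
      have "0 \<le> \<lceil>log (real p) (real i)\<rceil>" by (rule log_ceil_nonneg[OF p i])
      then have "nat (\<lceil>log (real p) (real i)\<rceil> + 1) = Suc (nat \<lceil>log (real p) (real i)\<rceil>)"
        by (simp add: nat_add_distrib)
      then show ?thesis unfolding log_ceil_mult[OF p i] .
    qed
    show "{a [^]\<^bsub>CS_group u d p\<^esub> p |a. a \<in> Gamma_star u d p i} \<subseteq> Gamma_star u d p (i * p)"
    proof (intro subsetI, elim CollectE exE conjE)
      fix x a assume x: "x = a [^]\<^bsub>CS_group u d p\<^esub> p" and a: "a \<in> Gamma_star u d p i"
      have "x \<in> CS (Suc (u + ?c i)) d p"
        unfolding x using a u unfolding Gamma_star_eq by (intro pow_p[OF p]) auto
      then show "x \<in> Gamma_star u d p (i * p)" unfolding Gamma_star_eq ce by simp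
    qed
  qed
  show ?thesis using part1 part2 part3 part4 part5 by blast
qed

end
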